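(* Under the standing setup with $\mathrm{Var}(X_N)>0$: (i) if $\delta_W\ge 0$, then $D\in[D^-_{MOB},\min\{D^+_{MOB},D_{ER}\}]$; (ii) if $\delta_W\le 0$, then $D\in[\max\{D^-_{MOB},D_{ER}\},D^+_{MOB}]$; (iii) the bounds in (i) and (ii) are sharp under the respective sign assumption (absent additional information).
   Context: Let $(X,Y,N)$ be a random triple with $X\in\{0,1\}$, $Y$ real-valued, $N$ taking values in a finite set $\mathcal N$. Write $p_n=\Pr(N=n)$, $X_n=\mathbb E[X\mid N=n]$, $Y_n=\mathbb E[Y\mid N=n]$, $X_N=\mathbb E[X\mid N]$, $Y_N=\mathbb E[Y\mid N]$. Assume some $n$ has $p_n>0$ and $X_n\in(0,1)$, and fix reals $\underline Y\le\overline Y$ with $\mathbb E[Y\mid X=x,N=n]\in[\underline Y,\overline Y]$ whenever $\Pr(X=x,N=n)>0$. $D=\mathbb E[Y\mid X=1]-\mathbb E[Y\mid X=0]$; $\delta_W=\mathbb E[\mathrm{Cov}(Y,X_N\mid X)]$; $D_{ER}=\mathrm{Cov}(Y_N,X_N)/\mathrm{Var}(X_N)$; $D^+_{MOB}=\big(\mathbb E[\min\{Y_N-\underline Y(1-X_N),\overline Y X_N\}]-\mathbb E[X]\mathbb E[Y]\big)/\mathrm{Var}(X)$, $D^-_{MOB}=\big(\mathbb E[Y](1-\mathbb E[X])-\mathbb E[\min\{Y_N-\underline Y X_N,\overline Y(1-X_N)\}]\big)/\mathrm{Var}(X)$. Sharpness under an assumption $\mathcal A$: the parameter lies in the interval for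 every joint distribution satisfying the standing assumptions and $\mathcal A$, and every value in the interval is attained by some joint distribution of $(X,Y,N)$ with the same observed $(p_n,X_n,Y_n)_n$, satisfying the standing bound and $\mathcal A$. *)

theory Defs
  imports "HOL-Probability.Probability"
begin

definition ev :: "'a measure \<Rightarrow> ('a \<Rightarrow> 'b) \<Rightarrow> 'b \<Rightarrow> 'a set" where
  "ev M Z z = {\<omega> \<in> space M. Z \<omega> = z}"

definition ev2 :: "'a measure \<Rightarrow> ('a \<Rightarrow> real) \<Rightarrow> ('a \<Rightarrow> 'n) \<Rightarrow> real \<Rightarrow> 'n \<Rightarrow> 'a set" where
  "ev2 M X N x n = {\<omega> \<in> space M. X \<omega> = x \<and> N \<omega> = n}"

definition condE :: "'a measure \<Rightarrow> ('a \<Rightarrow> real) \<Rightarrow> 'a set \<Rightarrow> real" where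
  "condE M f A = (\<integral>\<omega>. indicator A \<omega> * f \<omega> \<partial>M) / measure M A"

definition expect :: "'a measure \<Rightarrow> ('a \<Rightarrow> real) \<Rightarrow> real" where
  "expect M f = (\<integral>\<omega>. f \<omega> \<partial>M)"

definition var :: "'a measure \<Rightarrow> ('a \<Rightarrow> real) \<Rightarrow> real" where
  "var M f = expect M (\<lambda>\<omega>. (f \<omega> - expect M f)\<^sup>2)"

definition cov :: "'a measure \<Rightarrow> ('a \<Rightarrow> real) \<Rightarrow> ('a \<Rightarrow> real) \<Rightarrow> real" where
  "cov M f g = expect M (\<lambda>\<omega>. (f \<omega> - expect M f) * (g \<omega> - expect M g))"

definition condCov :: "'a measure \<Rightarrow> ('a \<Rightarrow> real) \<Rightarrow> ('a \<Rightarrow> real) \<Rightarrow> 'a set \<Rightarrow> real" where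
  "condCov M f g A = condE M (\<lambda>\<omega>. f \<omega> * g \<omega>) A - condE M f A * condE M g A"

definition pN :: "'a measure \<Rightarrow> ('a \<Rightarrow> 'n) \<Rightarrow> 'n \<Rightarrow> real" where
  "pN M N n = measure M (ev M N n)"

definition cN :: "'a measure \<Rightarrow> ('a \<Rightarrow> real) \<Rightarrow> ('a \<Rightarrow> 'n) \<Rightarrow> 'n \<Rightarrow> real" where
  "cN M Z N n = condE M Z (ev M N n)"

definition rvN :: "'a measure \<Rightarrow> ('a \<Rightarrow> real) \<Rightarrow> ('a \<Rightarrow> 'n) \<Rightarrow> 'a \<Rightarrow> real" where
  "rvN M Z N \<omega> = cN M Z N (N \<omega>)"

definition standing :: "'a measure \<Rightarrow> ('a \<Rightarrow> real) \<Rightarrow> ('a \<Rightarrow> real) \<Rightarrow> ('a \<Rightarrow> 'n::finite)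
    \<Rightarrow> real \<Rightarrow> real \<Rightarrow> bool" where
  "standing M X Y N ylo yhi \<longleftrightarrow>
     prob_space M \<and>
     X \<in> borel_measurable M \<and> (\<forall>\<omega>\<in>space M. X \<omega> \<in> {0, 1}) \<and>
     Y \<in> borel_measurable M \<and> integrable M Y \<and>
     N \<in> measurable M (count_space UNIV) \<and>
     (\<exists>n. pN M N n > 0 \<and> 0 < cN M X N n \<and> cN M X N n < 1) \<and>
     ylo \<le> yhi \<and>
     (\<forall>x\<in>{0, 1}. \<forall>n. measure M (ev2 M X N x n) > 0 \<longrightarrow>
         condE M Y (ev2 M X N x n) \<in> {ylo..yhi})"

definition same_obs :: "'a measure \<Rightarrow> ('a \<Rightarrow> real) \<Rightarrow> ('a \<Rightarrow> real) \<Rightarrow> ('a \<Rightarrow> 'n)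
   \<Rightarrow> 'b measure \<Rightarrow> ('b \<Rightarrow> real) \<Rightarrow> ('b \<Rightarrow> real) \<Rightarrow> ('b \<Rightarrow> 'n) \<Rightarrow> bool" where
  "same_obs M X Y N M' X' Y' N' \<longleftrightarrow>
     (\<forall>n. pN M' N' n = pN M N n \<and> cN M' X' N' n = cN M X N n \<and> cN M' Y' N' n = cN M Y N n)"

definition Dpar :: "'a measure \<Rightarrow> ('a \<Rightarrow> real) \<Rightarrow> ('a \<Rightarrow> real) \<Rightarrow> real" where
  "Dpar M X Y = condE M Y (ev M X 1) - condE M Y (ev M X 0)"

text \<open>delta_W = E[Cov(Y, X_N | X)] = sum over x of P(X=x) Cov(Y, X_N | X = x)\<close>
definition deltaW :: "'a measure \<Rightarrow> ('a \<Rightarrow> real) \<Rightarrow> ('a \<Rightarrow> real) \<Rightarrow> ('a \<Rightarrow> 'n) \<Rightarrow> real" where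
  "deltaW M X Y N = (\<Sum>x\<in>{0, 1::real}. measure M (ev M X x) * condCov M Y (rvN M X N) (ev M X x))"

definition D_ER :: "'a measure \<Rightarrow> ('a \<Rightarrow> real) \<Rightarrow> ('a \<Rightarrow> real) \<Rightarrow> ('a \<Rightarrow> 'n) \<Rightarrow> real" where
  "D_ER M X Y N = cov M (rvN M Y N) (rvN M X N) / var M (rvN M X N)"

definition D_MOB_plus :: "'a measure \<Rightarrow> ('a \<Rightarrow> real) \<Rightarrow> ('a \<Rightarrow> real) \<Rightarrow> ('a \<Rightarrow> 'n)
    \<Rightarrow> real \<Rightarrow> real \<Rightarrow> real" where
  "D_MOB_plus M X Y N ylo yhi =
     (expect M (\<lambda>\<omega>. min (rvN M Y N \<omega> - ylo * (1 - rvN M X N \<omega>)) (yhi * rvN M X N \<omega>))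
       - expect M X * expect M Y) / var M X"

definition D_MOB_minus :: "'a measure \<Rightarrow> ('a \<Rightarrow> real) \<Rightarrow> ('a \<Rightarrow> real) \<Rightarrow> ('a \<Rightarrow> 'n)
    \<Rightarrow> real \<Rightarrow> real \<Rightarrow> real" where
  "D_MOB_minus M X Y N ylo yhi =
     (expect M Y * (1 - expect M X)
       - expect M (\<lambda>\<omega>. min (rvN M Y N \<omega> - ylo * rvN M X N \<omega>) (yhi * (1 - rvN M X N \<omega>))))
     / var M X"

end

theory Submission
  imports Defs
begin



definition basic :: "'a measure \<Rightarrow> ('a \<Rightarrow> real) \<Rightarrow> ('a \<Rightarrow> real) \<Rightarrow> ('a \<Rightarrow> 'n::finite) \<Rightarrow> bool" where
 "basic M X Y N \<longleftrightarrow> prob_space M \<and> X \<in> borel_measurable M \<and> (\<forall>\<omega>\<in>space M. X \<omega> \<in> {0, 1}) \<and>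
    integrable M Y \<and> N \<in> measurable M (count_space UNIV)"

lemma ev2_sets:
  assumes "X \<in> borel_measurable M" "N \<in> measurable M (count_space UNIV)"
  shows "ev2 M X N x n \<in> sets M"
  unfolding ev2_def using assms by measurable

lemma L1:
  fixes N :: "'a \<Rightarrow> 'n::finite" and Z :: "'a \<Rightarrow> real" and g :: "real \<Rightarrow> 'n \<Rightarrow> real"
  assumes b: "basic M X Y N" and Z: "integrable M Z"
  shows "(\<integral>\<omega>. g (X \<omega>) (N \<omega>) * Z \<omega> \<partial>M) =
     (\<Sum>x\<in>{0,1::real}. \<Sum>n\<in>UNIV. g x n * (\<integral>\<omega>. indicator (ev2 M X N x n) \<omega> * Z \<omega> \<partial>M))"
proof -
  have Xm: "X \<in> borel_measurable M" and X01: "\<forall>\<omega>\<in>space M. X \<omega> \<in> {0, 1}"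
    and Nm: "N \<in> measurable M (count_space UNIV)" using b unfolding basic_def by auto
  have int: "integrable M (\<lambda>\<omega>. indicator (ev2 M X N x n) \<omega> * Z \<omega>)" for x n
    using integrable_mult_indicator[OF ev2_sets[OF Xm Nm] Z] by simp
  have pw: "g (X \<omega>) (N \<omega>) * Z \<omega> =
     (\<Sum>x\<in>{0,1::real}. \<Sum>n\<in>UNIV. g x n * (indicator (ev2 M X N x n) \<omega> * Z \<omega>))" if w: "\<omega> \<in> space M" for \<omega>
  proof -
    have e: "indicator (ev2 M X N x n) \<omega> = (if X \<omega> = x \<and> N \<omega> = n then 1 else (0::real))" for x n
      using w by (simp add: ev2_def indicator_def)
    have "(\<Sum>n\<in>UNIV. g x n * (indicator (ev2 M X N x n) \<omega> * Z \<omega>)) =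
          (if X \<omega> = x then g x (N \<omega>) * Z \<omega> else 0)" for x
    proof -
      have "(\<Sum>n\<in>UNIV. g x n * (indicator (ev2 M X N x n) \<omega> * Z \<omega>)) =
            (\<Sum>n\<in>UNIV. if n = N \<omega> then (if X \<omega> = x then g x n * Z \<omega> else 0) else 0)"
        by (intro sum.cong) (auto simp: e)
      then show ?thesis by simp
    qed
    then show ?thesis using X01 w by auto
  qed
  have "(\<integral>\<omega>. g (X \<omega>) (N \<omega>) * Z \<omega> \<partial>M) = (\<integral>\<omega>. (\<Sum>x\<in>{0,1::real}. \<Sum>n\<in>UNIV. g x n * (indicator (ev2 M X N x n) \<omega> * Z \<omega>)) \<partial>M)"
    by (rule Bochner_Integration.integral_cong) (auto simp: pw)
  also have "\<dots> = (\<Sum>x\<in>{0,1::real}. \<Sum>n\<in>UNIV. g x n * (\<integral>\<omega>. indicator (ev2 M X N x n) \<omega> * Z \<omega> \<partial>M))"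
    using int by (simp add: Bochner_Integration.integral_sum integrable_sum)
  finally show ?thesis .
qed

definition Qc :: "'a measure \<Rightarrow> ('a \<Rightarrow> real) \<Rightarrow> ('a \<Rightarrow> 'n) \<Rightarrow> real \<Rightarrow> 'n \<Rightarrow> real" where
  "Qc M X N x n = measure M (ev2 M X N x n)"
definition Sc :: "'a measure \<Rightarrow> ('a \<Rightarrow> real) \<Rightarrow> ('a \<Rightarrow> real) \<Rightarrow> ('a \<Rightarrow> 'n) \<Rightarrow> real \<Rightarrow> 'n \<Rightarrow> real" where
  "Sc M X Y N x n = (\<integral>\<omega>. indicator (ev2 M X N x n) \<omega> * Y \<omega> \<partial>M)"

lemma GEN:
  fixes N :: "'a \<Rightarrow> 'n::finite" and g :: "real \<Rightarrow> 'n \<Rightarrow> real"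
  assumes b: "basic M X Y N" and f: "\<And>\<omega>. \<omega> \<in> space M \<Longrightarrow> f \<omega> = g (X \<omega>) (N \<omega>)"
  shows "integral\<^sup>L M f = (\<Sum>n\<in>UNIV. g 0 n * Qc M X N 0 n + g 1 n * Qc M X N 1 n)"
proof -
  have P: "prob_space M" using b unfolding basic_def by auto
  then interpret prob_space M .
  have "integral\<^sup>L M f = (\<integral>\<omega>. g (X \<omega>) (N \<omega>) * 1 \<partial>M)"
    by (rule Bochner_Integration.integral_cong) (auto simp: f)
  also have "\<dots> = (\<Sum>x\<in>{0,1::real}. \<Sum>n\<in>UNIV. g x n * (\<integral>\<omega>. indicator (ev2 M X N x n) \<omega> * 1 \<partial>M))"
    by (rule L1[OF b]) simp
  also have "\<dots> = (\<Sum>n\<in>UNIV. g 0 n * Qc M X N 0 n + g 1 n * Qc M X N 1 n)"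
    by (simp add: Qc_def sum.distrib ev2_def Int_absorb2 Collect_conj_eq[symmetric])
  finally show ?thesis .
qed

lemma GENY:
  fixes N :: "'a \<Rightarrow> 'n::finite" and g :: "real \<Rightarrow> 'n \<Rightarrow> real"
  assumes b: "basic M X Y N" and f: "\<And>\<omega>. \<omega> \<in> space M \<Longrightarrow> f \<omega> = g (X \<omega>) (N \<omega>) * Y \<omega>"
  shows "integral\<^sup>L M f = (\<Sum>n\<in>UNIV. g 0 n * Sc M X Y N 0 n + g 1 n * Sc M X Y N 1 n)"
proof -
  have Y: "integrable M Y" using b unfolding basic_def by auto
  have "integral\<^sup>L M f = (\<integral>\<omega>. g (X \<omega>) (N \<omega>) * Y \<omega> \<partial>M)"
    by (rule Bochner_Integration.integral_cong) (auto simp: f)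
  also have "\<dots> = (\<Sum>x\<in>{0,1::real}. \<Sum>n\<in>UNIV. g x n * (\<integral>\<omega>. indicator (ev2 M X N x n) \<omega> * Y \<omega> \<partial>M))"
    by (rule L1[OF b Y])
  also have "\<dots> = (\<Sum>n\<in>UNIV. g 0 n * Sc M X Y N 0 n + g 1 n * Sc M X Y N 1 n)"
    by (simp add: Sc_def sum.distrib)
  finally show ?thesis .
qed




lemma ind_coll: "integral\<^sup>L M (indicator {\<omega>\<in>space M. P \<omega>}) = measure M {\<omega>\<in>space M. P \<omega>}"
  by (simp add: Int_absorb2 subset_iff)

lemma delta1: "(\<Sum>m\<in>UNIV. (if m = n then 1 else 0) * f m) = (f (n::'n::finite) :: real)"
proof -
  have "(\<Sum>m\<in>UNIV. (if m = n then 1 else 0) * f m) = (\<Sum>m\<in>UNIV. if m = n then f m else 0)"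
    by (intro sum.cong) auto
  then show ?thesis by simp
qed

lemma delta0: "(\<Sum>m\<in>(UNIV::'n::finite set). (if m = n then 0 else 0) * f m) = (0::real)"
  by simp

definition ra :: "('n \<Rightarrow> real) \<Rightarrow> ('n \<Rightarrow> real) \<Rightarrow> 'n \<Rightarrow> real" where
  "ra q0 q1 n = q1 n / (q0 n + q1 n)"
definition rb :: "('n \<Rightarrow> real) \<Rightarrow> ('n \<Rightarrow> real) \<Rightarrow> ('n \<Rightarrow> real) \<Rightarrow> ('n \<Rightarrow> real) \<Rightarrow> 'n \<Rightarrow> real" where
  "rb q0 q1 s0 s1 n = (s0 n + s1 n) / (q0 n + q1 n)"
definition rVarX :: "('n::finite \<Rightarrow> real) \<Rightarrow> ('n \<Rightarrow> real) \<Rightarrow> real" where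
  "rVarX q0 q1 = (\<Sum>n\<in>UNIV. (\<Sum>n\<in>UNIV. q1 n)\<^sup>2 * q0 n + (1 - (\<Sum>n\<in>UNIV. q1 n))\<^sup>2 * q1 n)"
definition rEXN :: "('n::finite \<Rightarrow> real) \<Rightarrow> ('n \<Rightarrow> real) \<Rightarrow> real" where
  "rEXN q0 q1 = (\<Sum>n\<in>UNIV. ra q0 q1 n * (q0 n + q1 n))"
definition rVarXN :: "('n::finite \<Rightarrow> real) \<Rightarrow> ('n \<Rightarrow> real) \<Rightarrow> real" where
  "rVarXN q0 q1 = (\<Sum>n\<in>UNIV. (ra q0 q1 n - rEXN q0 q1)\<^sup>2 * (q0 n + q1 n))"
definition rEYN :: "('n::finite \<Rightarrow> real) \<Rightarrow> ('n \<Rightarrow> real) \<Rightarrow> ('n \<Rightarrow> real) \<Rightarrow> ('n \<Rightarrow> real) \<Rightarrow> real" where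
  "rEYN q0 q1 s0 s1 = (\<Sum>n\<in>UNIV. rb q0 q1 s0 s1 n * (q0 n + q1 n))"
definition rCov :: "('n::finite \<Rightarrow> real) \<Rightarrow> ('n \<Rightarrow> real) \<Rightarrow> ('n \<Rightarrow> real) \<Rightarrow> ('n \<Rightarrow> real) \<Rightarrow> real" where
  "rCov q0 q1 s0 s1 = (\<Sum>n\<in>UNIV. ((rb q0 q1 s0 s1 n - rEYN q0 q1 s0 s1) * (ra q0 q1 n - rEXN q0 q1)) * (q0 n + q1 n))"
definition rDpar :: "('n::finite \<Rightarrow> real) \<Rightarrow> ('n \<Rightarrow> real) \<Rightarrow> ('n \<Rightarrow> real) \<Rightarrow> ('n \<Rightarrow> real) \<Rightarrow> real" where
  "rDpar q0 q1 s0 s1 = (\<Sum>n\<in>UNIV. s1 n) / (\<Sum>n\<in>UNIV. q1 n) - (\<Sum>n\<in>UNIV. s0 n) / (\<Sum>n\<in>UNIV. q0 n)"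
definition rdelta :: "('n::finite \<Rightarrow> real) \<Rightarrow> ('n \<Rightarrow> real) \<Rightarrow> ('n \<Rightarrow> real) \<Rightarrow> ('n \<Rightarrow> real) \<Rightarrow> real" where
  "rdelta q0 q1 s0 s1 =
     (\<Sum>n\<in>UNIV. q0 n) * ((\<Sum>n\<in>UNIV. ra q0 q1 n * s0 n) / (\<Sum>n\<in>UNIV. q0 n)
        - (\<Sum>n\<in>UNIV. s0 n) / (\<Sum>n\<in>UNIV. q0 n) * ((\<Sum>n\<in>UNIV. ra q0 q1 n * q0 n) / (\<Sum>n\<in>UNIV. q0 n)))
   + (\<Sum>n\<in>UNIV. q1 n) * ((\<Sum>n\<in>UNIV. ra q0 q1 n * s1 n) / (\<Sum>n\<in>UNIV. q1 n)
        - (\<Sum>n\<in>UNIV. s1 n) / (\<Sum>n\<in>UNIV. q1 n) * ((\<Sum>n\<in>UNIV. ra q0 q1 n * q1 n) / (\<Sum>n\<in>UNIV. q1 n)))"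
definition rDplus :: "('n::finite \<Rightarrow> real) \<Rightarrow> ('n \<Rightarrow> real) \<Rightarrow> ('n \<Rightarrow> real) \<Rightarrow> ('n \<Rightarrow> real) \<Rightarrow> real \<Rightarrow> real \<Rightarrow> real" where
  "rDplus q0 q1 s0 s1 ylo yhi =
     ((\<Sum>n\<in>UNIV. min (rb q0 q1 s0 s1 n - ylo * (1 - ra q0 q1 n)) (yhi * ra q0 q1 n) * (q0 n + q1 n))
       - (\<Sum>n\<in>UNIV. q1 n) * (\<Sum>n\<in>UNIV. s0 n + s1 n)) / rVarX q0 q1"
definition rDminus :: "('n::finite \<Rightarrow> real) \<Rightarrow> ('n \<Rightarrow> real) \<Rightarrow> ('n \<Rightarrow> real) \<Rightarrow> ('n \<Rightarrow> real) \<Rightarrow> real \<Rightarrow> real \<Rightarrow> real" where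
  "rDminus q0 q1 s0 s1 ylo yhi =
     ((\<Sum>n\<in>UNIV. s0 n + s1 n) * (1 - (\<Sum>n\<in>UNIV. q1 n))
       - (\<Sum>n\<in>UNIV. min (rb q0 q1 s0 s1 n - ylo * ra q0 q1 n) (yhi * (1 - ra q0 q1 n)) * (q0 n + q1 n))) / rVarX q0 q1"

context
  fixes M :: "'a measure" and X Y :: "'a \<Rightarrow> real" and N :: "'a \<Rightarrow> 'n::finite"
  assumes b: "basic M X Y N"
begin

abbreviation "q0 \<equiv> Qc M X N 0"
abbreviation "q1 \<equiv> Qc M X N 1"
abbreviation "s0 \<equiv> Sc M X Y N 0"
abbreviation "s1 \<equiv> Sc M X Y N 1"

lemma bP: "prob_space M" using b unfolding basic_def by auto
lemma bX: "X \<in> borel_measurable M" using b unfolding basic_def by auto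
lemma bX01: "\<omega> \<in> space M \<Longrightarrow> X \<omega> = 0 \<or> X \<omega> = 1" using b unfolding basic_def by auto
lemma bN: "N \<in> measurable M (count_space UNIV)" using b unfolding basic_def by auto
lemma bY: "integrable M Y" using b unfolding basic_def by auto

lemma Q_nonneg: "Qc M X N x n \<ge> 0" by (simp add: Qc_def)

lemma Q_sum: "(\<Sum>n\<in>UNIV. q0 n + q1 n) = 1"
proof -
  interpret prob_space M by (rule bP)
  have "integral\<^sup>L M (\<lambda>_. 1::real) = (\<Sum>n\<in>UNIV. 1 * q0 n + 1 * q1 n)"
    by (rule GEN[OF b]) simp
  then show ?thesis by (simp add: prob_space)
qed

lemma S_zero: assumes "Qc M X N x n = 0" shows "Sc M X Y N x n = 0"
proof -
  interpret prob_space M by (rule bP)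
  have s: "ev2 M X N x n \<in> sets M" by (rule ev2_sets[OF bX bN])
  then have "ev2 M X N x n \<in> null_sets M" using assms
    by (simp add: Qc_def null_sets_def emeasure_eq_measure)
  then have "AE \<omega> in M. \<omega> \<notin> ev2 M X N x n" by (rule AE_not_in)
  then have "AE \<omega> in M. indicator (ev2 M X N x n) \<omega> * Y \<omega> = 0"
    by eventually_elim simp
  then show ?thesis unfolding Sc_def by (simp add: integral_eq_zero_AE)
qed

lemma R_pN: "pN M N n = q0 n + q1 n"
proof -
  have "pN M N n = integral\<^sup>L M (indicator (ev M N n))"
    unfolding pN_def ev_def by (rule ind_coll[symmetric])
  also have "\<dots> = (\<Sum>m\<in>UNIV. (if m = n then 1 else 0) * q0 m + (if m = n then 1 else 0) * q1 m)"
    by (rule GEN[OF b]) (simp add: ev_def indicator_def)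
  finally show ?thesis by (simp only: sum.distrib delta1)
qed

lemma R_cNX: "cN M X N n = q1 n / (q0 n + q1 n)"
proof -
  have "(\<integral>\<omega>. indicator (ev M N n) \<omega> * X \<omega> \<partial>M) = (\<Sum>m\<in>UNIV. (if m = n then 0 else 0) * q0 m + (if m = n then 1 else 0) * q1 m)"
    by (rule GEN[OF b]) (auto simp: ev_def indicator_def dest: bX01)
  then have "(\<integral>\<omega>. indicator (ev M N n) \<omega> * X \<omega> \<partial>M) = q1 n"
    by (simp only: sum.distrib delta1 delta0)
  moreover have "measure M (ev M N n) = q0 n + q1 n" using R_pN by (simp add: pN_def)
  ultimately show ?thesis by (simp add: cN_def condE_def)
qed

lemma R_cNY: "cN M Y N n = (s0 n + s1 n) / (q0 n + q1 n)"
proof -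
  have "(\<integral>\<omega>. indicator (ev M N n) \<omega> * Y \<omega> \<partial>M) = (\<Sum>m\<in>UNIV. (if m = n then 1 else 0) * s0 m + (if m = n then 1 else 0) * s1 m)"
    by (rule GENY[OF b]) (auto simp: ev_def indicator_def)
  then have "(\<integral>\<omega>. indicator (ev M N n) \<omega> * Y \<omega> \<partial>M) = s0 n + s1 n"
    by (simp only: sum.distrib delta1)
  moreover have "measure M (ev M N n) = q0 n + q1 n" using R_pN by (simp add: pN_def)
  ultimately show ?thesis by (simp add: cN_def condE_def)
qed

lemma R_rvX: "rvN M X N = (\<lambda>\<omega>. q1 (N \<omega>) / (q0 (N \<omega>) + q1 (N \<omega>)))"
  by (rule ext) (simp add: rvN_def R_cNX)

lemma R_rvY: "rvN M Y N = (\<lambda>\<omega>. (s0 (N \<omega>) + s1 (N \<omega>)) / (q0 (N \<omega>) + q1 (N \<omega>)))"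
  by (rule ext) (simp add: rvN_def R_cNY)

lemma R_EX: "expect M X = (\<Sum>n\<in>UNIV. q1 n)"
proof -
  have "expect M X = (\<Sum>n\<in>UNIV. 0 * q0 n + 1 * q1 n)"
    unfolding expect_def by (rule GEN[OF b]) (auto dest: bX01)
  then show ?thesis by simp
qed

lemma R_EY: "expect M Y = (\<Sum>n\<in>UNIV. s0 n + s1 n)"
proof -
  have "expect M Y = (\<Sum>n\<in>UNIV. 1 * s0 n + 1 * s1 n)"
    unfolding expect_def by (rule GENY[OF b]) auto
  then show ?thesis by simp
qed

lemma R_varX: "var M X = (\<Sum>n\<in>UNIV. (\<Sum>n\<in>UNIV. q1 n)\<^sup>2 * q0 n + (1 - (\<Sum>n\<in>UNIV. q1 n))\<^sup>2 * q1 n)"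
proof -
  have "var M X = (\<Sum>n\<in>UNIV. (0 - expect M X)\<^sup>2 * q0 n + (1 - expect M X)\<^sup>2 * q1 n)"
    unfolding var_def expect_def[of M "\<lambda>\<omega>. (X \<omega> - expect M X)\<^sup>2"]
    by (rule GEN[OF b]) (auto dest: bX01)
  then show ?thesis by (simp add: R_EX)
qed

lemma R_EN: "expect M (\<lambda>\<omega>. h (N \<omega>)) = (\<Sum>n\<in>UNIV. h n * (q0 n + q1 n))"
proof -
  have "expect M (\<lambda>\<omega>. h (N \<omega>)) = (\<Sum>n\<in>UNIV. h n * q0 n + h n * q1 n)"
    unfolding expect_def by (rule GEN[OF b]) auto
  then show ?thesis by (simp add: algebra_simps)
qed

lemma R_measX: assumes "x \<in> {0,1}" shows "measure M (ev M X x) = (\<Sum>n\<in>UNIV. Qc M X N x n)"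
proof -
  have "measure M (ev M X x) = integral\<^sup>L M (indicator (ev M X x))"
    unfolding ev_def by (rule ind_coll[symmetric])
  also have "\<dots> = (\<Sum>n\<in>UNIV. (if 0 = x then 1 else 0) * q0 n + (if 1 = x then 1 else 0) * q1 n)"
    by (rule GEN[OF b]) (auto simp: ev_def indicator_def)
  finally show ?thesis using assms by auto
qed

lemma R_indXN: assumes "x \<in> {0,1}"
  shows "(\<integral>\<omega>. indicator (ev M X x) \<omega> * h (N \<omega>) \<partial>M) = (\<Sum>n\<in>UNIV. h n * Qc M X N x n)"
proof -
  have "(\<integral>\<omega>. indicator (ev M X x) \<omega> * h (N \<omega>) \<partial>M) = (\<Sum>n\<in>UNIV. (if 0 = x then h n else 0) * q0 n + (if 1 = x then h n else 0) * q1 n)"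
    by (rule GEN[OF b]) (auto simp: ev_def indicator_def)
  then show ?thesis using assms by auto
qed

lemma R_indXNY: assumes "x \<in> {0,1}"
  shows "(\<integral>\<omega>. indicator (ev M X x) \<omega> * (Y \<omega> * h (N \<omega>)) \<partial>M) = (\<Sum>n\<in>UNIV. h n * Sc M X Y N x n)"
proof -
  have "(\<integral>\<omega>. indicator (ev M X x) \<omega> * (Y \<omega> * h (N \<omega>)) \<partial>M) = (\<Sum>n\<in>UNIV. (if 0 = x then h n else 0) * s0 n + (if 1 = x then h n else 0) * s1 n)"
    by (rule GENY[OF b]) (auto simp: ev_def indicator_def)
  then show ?thesis using assms by auto
qed

lemma R_indXY: assumes "x \<in> {0,1}"
  shows "(\<integral>\<omega>. indicator (ev M X x) \<omega> * Y \<omega> \<partial>M) = (\<Sum>n\<in>UNIV. Sc M X Y N x n)"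
proof -
  have "(\<integral>\<omega>. indicator (ev M X x) \<omega> * Y \<omega> \<partial>M) = (\<Sum>n\<in>UNIV. (if 0 = x then 1 else 0) * s0 n + (if 1 = x then 1 else 0) * s1 n)"
    by (rule GENY[OF b]) (auto simp: ev_def indicator_def)
  then show ?thesis using assms by auto
qed

lemma R_rvX': "rvN M X N = (\<lambda>\<omega>. ra q0 q1 (N \<omega>))"
  by (rule ext) (simp add: rvN_def R_cNX ra_def)

lemma R_rvY': "rvN M Y N = (\<lambda>\<omega>. rb q0 q1 s0 s1 (N \<omega>))"
  by (rule ext) (simp add: rvN_def R_cNY rb_def)

lemma R_EXN: "expect M (rvN M X N) = rEXN q0 q1"
  unfolding R_rvX' rEXN_def by (rule R_EN)

lemma R_EYN: "expect M (rvN M Y N) = rEYN q0 q1 s0 s1"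
  unfolding R_rvY' rEYN_def by (rule R_EN)

lemma R_varXN: "var M (rvN M X N) = rVarXN q0 q1"
  unfolding var_def R_EXN unfolding R_rvX' rVarXN_def by (rule R_EN)

lemma R_cov: "cov M (rvN M Y N) (rvN M X N) = rCov q0 q1 s0 s1"
  unfolding cov_def R_EXN R_EYN unfolding R_rvX' R_rvY' rCov_def by (rule R_EN)

lemma R_DER: "D_ER M X Y N = rCov q0 q1 s0 s1 / rVarXN q0 q1"
  by (simp add: D_ER_def R_cov R_varXN)

lemma R_Dpar: "Dpar M X Y = rDpar q0 q1 s0 s1"
  by (simp add: Dpar_def rDpar_def condE_def R_indXY R_measX)

lemma R_deltaW: "deltaW M X Y N = rdelta q0 q1 s0 s1"
proof -
  have a: "(\<integral>\<omega>. indicator (ev M X x) \<omega> * (Y \<omega> * rvN M X N \<omega>) \<partial>M) = (\<Sum>n\<in>UNIV. ra q0 q1 n * Sc M X Y N x n)"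
    if "x \<in> {0,1}" for x
    unfolding R_rvX' by (rule R_indXNY[OF that])
  have c: "(\<integral>\<omega>. indicator (ev M X x) \<omega> * rvN M X N \<omega> \<partial>M) = (\<Sum>n\<in>UNIV. ra q0 q1 n * Qc M X N x n)"
    if "x \<in> {0,1}" for x
    unfolding R_rvX' by (rule R_indXN[OF that])
  show ?thesis
    by (simp add: deltaW_def rdelta_def condCov_def condE_def a c R_indXY R_measX)
qed

lemma R_Dplus: "D_MOB_plus M X Y N ylo yhi = rDplus q0 q1 s0 s1 ylo yhi"
proof -
  have "expect M (\<lambda>\<omega>. min (rvN M Y N \<omega> - ylo * (1 - rvN M X N \<omega>)) (yhi * rvN M X N \<omega>))
     = (\<Sum>n\<in>UNIV. min (rb q0 q1 s0 s1 n - ylo * (1 - ra q0 q1 n)) (yhi * ra q0 q1 n) * (q0 n + q1 n))"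
    unfolding R_rvX' R_rvY' by (rule R_EN)
  then show ?thesis by (simp add: D_MOB_plus_def rDplus_def R_EX R_EY R_varX rVarX_def)
qed

lemma R_Dminus: "D_MOB_minus M X Y N ylo yhi = rDminus q0 q1 s0 s1 ylo yhi"
proof -
  have "expect M (\<lambda>\<omega>. min (rvN M Y N \<omega> - ylo * rvN M X N \<omega>) (yhi * (1 - rvN M X N \<omega>)))
     = (\<Sum>n\<in>UNIV. min (rb q0 q1 s0 s1 n - ylo * ra q0 q1 n) (yhi * (1 - ra q0 q1 n)) * (q0 n + q1 n))"
    unfolding R_rvX' R_rvY' by (rule R_EN)
  then show ?thesis by (simp add: D_MOB_minus_def rDminus_def R_EX R_EY R_varX rVarX_def)
qed

end



lemma alg1: assumes "(p1::real) > 0" "1 - p1 > 0" shows "(1 - p1) * (A0 / (1 - p1) - S0 / (1 - p1) * ((p1 - Qa) / (1 - p1)))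
      + p1 * (A1 / p1 - S1 / p1 * (Qa / p1)) = A0 + A1 - p1 * (S0 + S1) - (S1 / p1 - S0 / (1 - p1)) * (Qa - p1\<^sup>2)"
proof -
  have g: "\<And>q::real. q \<noteq> 0 \<Longrightarrow> q * (A0 / q - S0 / q * ((p1 - Qa) / q)) = A0 - S0*(p1-Qa)/q"
    by (simp add: field_simps)
  have e1: "(1 - p1) * (A0 / (1 - p1) - S0 / (1 - p1) * ((p1 - Qa) / (1 - p1))) = A0 - S0*(p1-Qa)/(1-p1)"
    using assms by (intro g) simp
  have e2: "p1 * (A1 / p1 - S1 / p1 * (Qa / p1)) = A1 - S1*Qa/p1" using assms by (simp add: field_simps)
  have e3: "(S1 / p1 - S0 / (1 - p1)) * (Qa - p1\<^sup>2) = S1*Qa/p1 - S1*p1 - S0*(Qa - p1\<^sup>2)/(1-p1)"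
    using assms by (simp add: field_simps power2_eq_square)
  have e4: "- p1 * S0 + S0*(Qa - p1\<^sup>2)/(1-p1) = - S0*(p1-Qa)/(1-p1)"
    using assms by (simp add: field_simps power2_eq_square)
  have e4': "S0*(Qa - p1\<^sup>2)/(1-p1) = p1 * S0 - S0*(p1-Qa)/(1-p1)" using e4 by linarith
  define t where "t = S0*(p1-Qa)/(1-p1)"
  define u where "u = S1*Qa/p1"
  show ?thesis unfolding e1 e2 e3 e4' t_def[symmetric] u_def[symmetric] by (simp add: algebra_simps)
qed

context
  fixes q0 q1 s0 s1 :: "'n::finite \<Rightarrow> real"
  assumes nn0: "\<And>n. q0 n \<ge> 0" and nn1: "\<And>n. q1 n \<ge> 0"
    and z0: "\<And>n. q0 n = 0 \<Longrightarrow> s0 n = 0" and z1: "\<And>n. q1 n = 0 \<Longrightarrow> s1 n = 0"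
begin

lemma pn_a: "ra q0 q1 n * (q0 n + q1 n) = q1 n"
proof (cases "q0 n + q1 n = 0")
  case True then have "q1 n = 0" using nn0[of n] nn1[of n] by linarith
  then show ?thesis using True by (simp add: ra_def)
next
  case False then show ?thesis by (simp add: ra_def)
qed

lemma pn_a2: "ra q0 q1 n * q0 n = ra q0 q1 n * (q0 n + q1 n) - ra q0 q1 n * q1 n"
  by (simp add: algebra_simps)

lemma pn_b: "rb q0 q1 s0 s1 n * (q0 n + q1 n) = s0 n + s1 n"
proof (cases "q0 n + q1 n = 0")
  case True then have "q1 n = 0" "q0 n = 0" using nn0[of n] nn1[of n] by linarith+
  then show ?thesis using True z0 z1 by (simp add: rb_def)
next
  case False then show ?thesis by (simp add: rb_def)
qed

lemma pn_plus: "min (rb q0 q1 s0 s1 n - ylo * (1 - ra q0 q1 n)) (yhi * ra q0 q1 n) * (q0 n + q1 n)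
   = min (s0 n + s1 n - ylo * q0 n) (yhi * q1 n)"
proof (cases "q0 n + q1 n = 0")
  case True then have "q1 n = 0" "q0 n = 0" using nn0[of n] nn1[of n] by linarith+
  then show ?thesis using True z0 z1 by (simp add: rb_def ra_def)
next
  case False then have p: "q0 n + q1 n > 0" using nn0[of n] nn1[of n] by linarith
  have "min (rb q0 q1 s0 s1 n - ylo * (1 - ra q0 q1 n)) (yhi * ra q0 q1 n) * (q0 n + q1 n)
     = min ((rb q0 q1 s0 s1 n - ylo * (1 - ra q0 q1 n)) * (q0 n + q1 n)) (yhi * ra q0 q1 n * (q0 n + q1 n))"
    using p by (simp add: min_mult_distrib_right)
  also have "\<dots> = min (s0 n + s1 n - ylo * q0 n) (yhi * q1 n)"
  proof -
    have "(rb q0 q1 s0 s1 n - ylo * (1 - ra q0 q1 n)) * (q0 n + q1 n) =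
      rb q0 q1 s0 s1 n * (q0 n + q1 n) - ylo * (q0 n + q1 n) + ylo * (ra q0 q1 n * (q0 n + q1 n))"
      by (simp add: algebra_simps)
    also have "\<dots> = s0 n + s1 n - ylo * q0 n" by (simp only: pn_a pn_b) (simp add: algebra_simps)
    finally have e1: "(rb q0 q1 s0 s1 n - ylo * (1 - ra q0 q1 n)) * (q0 n + q1 n) = s0 n + s1 n - ylo * q0 n" .
    have e2: "yhi * ra q0 q1 n * (q0 n + q1 n) = yhi * q1 n"
      using pn_a[of n] by (simp add: mult.assoc)
    show ?thesis by (simp only: e1 e2)
  qed
  finally show ?thesis .
qed

lemma pn_minus: "min (rb q0 q1 s0 s1 n - ylo * ra q0 q1 n) (yhi * (1 - ra q0 q1 n)) * (q0 n + q1 n)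
   = min (s0 n + s1 n - ylo * q1 n) (yhi * q0 n)"
proof (cases "q0 n + q1 n = 0")
  case True then have "q1 n = 0" "q0 n = 0" using nn0[of n] nn1[of n] by linarith+
  then show ?thesis using True z0 z1 by (simp add: rb_def ra_def)
next
  case False then have p: "q0 n + q1 n > 0" using nn0[of n] nn1[of n] by linarith
  have "min (rb q0 q1 s0 s1 n - ylo * ra q0 q1 n) (yhi * (1 - ra q0 q1 n)) * (q0 n + q1 n)
     = min ((rb q0 q1 s0 s1 n - ylo * ra q0 q1 n) * (q0 n + q1 n)) (yhi * (1 - ra q0 q1 n) * (q0 n + q1 n))"
    using p by (simp add: min_mult_distrib_right)
  also have "\<dots> = min (s0 n + s1 n - ylo * q1 n) (yhi * q0 n)"
  proof -
    have "(rb q0 q1 s0 s1 n - ylo * ra q0 q1 n) * (q0 n + q1 n) = rb q0 q1 s0 s1 n * (q0 n + q1 n) - ylo * (ra q0 q1 n * (q0 n + q1 n))"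
      by (simp add: algebra_simps)
    then have e1: "(rb q0 q1 s0 s1 n - ylo * ra q0 q1 n) * (q0 n + q1 n) = s0 n + s1 n - ylo * q1 n"
      by (simp only: pn_a pn_b)
    have "yhi * (1 - ra q0 q1 n) * (q0 n + q1 n) = yhi * (q0 n + q1 n) - yhi * (ra q0 q1 n * (q0 n + q1 n))"
      by (simp add: algebra_simps)
    also have "\<dots> = yhi * q0 n" by (simp only: pn_a) (simp add: algebra_simps)
    finally have e2: "yhi * (1 - ra q0 q1 n) * (q0 n + q1 n) = yhi * q0 n" .
    show ?thesis by (simp only: e1 e2)
  qed
  finally show ?thesis .
qed

lemma L_EXN: "rEXN q0 q1 = (\<Sum>n\<in>UNIV. q1 n)"
  unfolding rEXN_def by (simp add: pn_a)

lemma L_EYN: "rEYN q0 q1 s0 s1 = (\<Sum>n\<in>UNIV. s0 n + s1 n)"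
  unfolding rEYN_def by (simp add: pn_b)

context
  assumes sum1: "(\<Sum>n\<in>UNIV. q0 n + q1 n) = 1"
begin

lemma sum1': "sum q0 UNIV + sum q1 UNIV = 1" using sum1 by (simp add: sum.distrib)

lemma L_VarXN: "rVarXN q0 q1 = (\<Sum>n\<in>UNIV. ra q0 q1 n * q1 n) - (\<Sum>n\<in>UNIV. q1 n)\<^sup>2"
proof -
  let ?c = "\<Sum>n\<in>UNIV. q1 n"
  have pw: "(ra q0 q1 n - ?c)\<^sup>2 * (q0 n + q1 n) = ra q0 q1 n * q1 n - 2 * ?c * q1 n + ?c\<^sup>2 * (q0 n + q1 n)" for n
  proof -
    have "(ra q0 q1 n - ?c)\<^sup>2 * (q0 n + q1 n) = ra q0 q1 n * (ra q0 q1 n * (q0 n + q1 n)) - 2 * ?c * (ra q0 q1 n * (q0 n + q1 n)) + ?c\<^sup>2 * (q0 n + q1 n)"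
      by (simp add: power2_eq_square algebra_simps)
    then show ?thesis by (simp only: pn_a)
  qed
  have "rVarXN q0 q1 = (\<Sum>n\<in>UNIV. ra q0 q1 n * q1 n - 2 * ?c * q1 n + ?c\<^sup>2 * (q0 n + q1 n))"
    unfolding rVarXN_def L_EXN by (simp only: pw)
  also have "\<dots> = (\<Sum>n\<in>UNIV. ra q0 q1 n * q1 n) - 2 * ?c * ?c + ?c\<^sup>2 * 1"
    by (simp only: sum.distrib sum_subtractf sum_distrib_left[symmetric] sum1')
  finally show ?thesis by (simp add: power2_eq_square)
qed

lemma L_Cov: "rCov q0 q1 s0 s1 = (\<Sum>n\<in>UNIV. ra q0 q1 n * (s0 n + s1 n)) - (\<Sum>n\<in>UNIV. q1 n) * (\<Sum>n\<in>UNIV. s0 n + s1 n)"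
proof -
  let ?c = "\<Sum>n\<in>UNIV. q1 n"
  let ?e = "\<Sum>n\<in>UNIV. s0 n + s1 n"
  have pw: "((rb q0 q1 s0 s1 n - ?e) * (ra q0 q1 n - ?c)) * (q0 n + q1 n) = ra q0 q1 n * (s0 n + s1 n) - ?c * (s0 n + s1 n) - ?e * q1 n + ?e * ?c * (q0 n + q1 n)" for n
  proof -
    have "((rb q0 q1 s0 s1 n - ?e) * (ra q0 q1 n - ?c)) * (q0 n + q1 n) = ra q0 q1 n * (rb q0 q1 s0 s1 n * (q0 n + q1 n)) - ?c * (rb q0 q1 s0 s1 n * (q0 n + q1 n)) - ?e * (ra q0 q1 n * (q0 n + q1 n)) + ?e * ?c * (q0 n + q1 n)"
      by (simp add: algebra_simps)
    then show ?thesis by (simp only: pn_a pn_b)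
  qed
  have "rCov q0 q1 s0 s1 = (\<Sum>n\<in>UNIV. ra q0 q1 n * (s0 n + s1 n) - ?c * (s0 n + s1 n) - ?e * q1 n + ?e * ?c * (q0 n + q1 n))"
    unfolding rCov_def L_EXN L_EYN by (simp only: pw)
  also have "\<dots> = (\<Sum>n\<in>UNIV. ra q0 q1 n * (s0 n + s1 n)) - ?c * ?e - ?e * ?c + ?e * ?c * 1"
    by (simp only: sum.distrib sum_subtractf sum_distrib_left[symmetric] sum1')
  finally show ?thesis by simp
qed

lemma L_raq0: "(\<Sum>n\<in>UNIV. ra q0 q1 n * q0 n) = (\<Sum>n\<in>UNIV. q1 n) - (\<Sum>n\<in>UNIV. ra q0 q1 n * q1 n)"
proof -
  have "(\<Sum>n\<in>UNIV. ra q0 q1 n * q0 n) = (\<Sum>n\<in>UNIV. ra q0 q1 n * (q0 n + q1 n) - ra q0 q1 n * q1 n)"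
    by (intro sum.cong) (simp_all add: algebra_simps)
  also have "\<dots> = (\<Sum>n\<in>UNIV. q1 n) - (\<Sum>n\<in>UNIV. ra q0 q1 n * q1 n)"
    by (simp only: sum_subtractf pn_a)
  finally show ?thesis .
qed

lemma L_P0: "(\<Sum>n\<in>UNIV. q0 n) = 1 - (\<Sum>n\<in>UNIV. q1 n)"
  using sum1 by (simp add: sum.distrib)

lemma C1:
  assumes P1: "(\<Sum>n\<in>UNIV. q1 n) > 0" and P0: "(\<Sum>n\<in>UNIV. q0 n) > 0"
  shows "rdelta q0 q1 s0 s1 = rCov q0 q1 s0 s1 - rDpar q0 q1 s0 s1 * rVarXN q0 q1"
proof -
  define p1 where "p1 = (\<Sum>n\<in>UNIV. q1 n)"
  define S0 where "S0 = (\<Sum>n\<in>UNIV. s0 n)"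
  define S1 where "S1 = (\<Sum>n\<in>UNIV. s1 n)"
  define A0 where "A0 = (\<Sum>n\<in>UNIV. ra q0 q1 n * s0 n)"
  define A1 where "A1 = (\<Sum>n\<in>UNIV. ra q0 q1 n * s1 n)"
  define Qa where "Qa = (\<Sum>n\<in>UNIV. ra q0 q1 n * q1 n)"
  have p0: "(\<Sum>n\<in>UNIV. q0 n) = 1 - p1" using L_P0 p1_def by simp
  have A: "(\<Sum>n\<in>UNIV. ra q0 q1 n * (s0 n + s1 n)) = A0 + A1"
    by (simp add: A0_def A1_def algebra_simps sum.distrib)
  have E: "(\<Sum>n\<in>UNIV. s0 n + s1 n) = S0 + S1" by (simp add: S0_def S1_def sum.distrib)
  have d: "rdelta q0 q1 s0 s1 = (1 - p1) * (A0 / (1 - p1) - S0 / (1 - p1) * ((p1 - Qa) / (1 - p1)))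
      + p1 * (A1 / p1 - S1 / p1 * (Qa / p1))"
    unfolding rdelta_def p0 L_raq0 by (simp add: p1_def S0_def S1_def A0_def A1_def Qa_def)
  have c: "rCov q0 q1 s0 s1 = A0 + A1 - p1 * (S0 + S1)" unfolding L_Cov A E p1_def ..
  have v: "rVarXN q0 q1 = Qa - p1\<^sup>2" unfolding L_VarXN Qa_def p1_def ..
  have dp: "rDpar q0 q1 s0 s1 = S1 / p1 - S0 / (1 - p1)" unfolding rDpar_def p0 by (simp add: S0_def S1_def p1_def)
  have a: "p1 > 0" "1 - p1 > 0" using P1 P0 p0 p1_def by auto
  show ?thesis unfolding d c v dp using a by (rule alg1)
qed

lemma C_VarX: "rVarX q0 q1 = (\<Sum>n\<in>UNIV. q1 n) * (1 - (\<Sum>n\<in>UNIV. q1 n))"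
proof -
  have "rVarX q0 q1 = (\<Sum>n\<in>UNIV. q1 n)\<^sup>2 * (\<Sum>n\<in>UNIV. q0 n) + (1 - (\<Sum>n\<in>UNIV. q1 n))\<^sup>2 * (\<Sum>n\<in>UNIV. q1 n)"
    unfolding rVarX_def by (simp add: sum.distrib sum_distrib_left)
  then show ?thesis unfolding L_P0 by (simp add: power2_eq_square algebra_simps)
qed


context
  assumes P1: "(\<Sum>n\<in>UNIV. q1 n) > 0" and P0: "(\<Sum>n\<in>UNIV. q0 n) > 0"
begin

lemma V_pos: "rVarX q0 q1 > 0"
  unfolding C_VarX using P1 P0 L_P0 by simp

lemma C_Dpar: "rDpar q0 q1 s0 s1 = ((\<Sum>n\<in>UNIV. s1 n) - (\<Sum>n\<in>UNIV. q1 n) * (\<Sum>n\<in>UNIV. s0 n + s1 n)) / rVarX q0 q1"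
proof -
  define p1 where "p1 = (\<Sum>n\<in>UNIV. q1 n)"
  have a: "p1 > 0" "1 - p1 > 0" using P1 P0 L_P0 p1_def by auto
  have g: "\<And>q::real. q \<noteq> 0 \<Longrightarrow> p1 \<noteq> 0 \<Longrightarrow> S1 / p1 - S0 / q = (S1 * q - S0 * p1) / (p1 * q)" for S0 S1
    by (simp add: field_simps)
  have "rDpar q0 q1 s0 s1 = (sum s1 UNIV * (1 - p1) - sum s0 UNIV * p1) / (p1 * (1 - p1))"
    unfolding rDpar_def L_P0 p1_def[symmetric] using a by (intro g) auto
  then show ?thesis unfolding C_VarX p1_def[symmetric] by (simp add: sum.distrib algebra_simps)
qed

lemma C_Dplus: "rDplus q0 q1 s0 s1 ylo yhi = ((\<Sum>n\<in>UNIV. min (s0 n + s1 n - ylo * q0 n) (yhi * q1 n)) - (\<Sum>n\<in>UNIV. q1 n) * (\<Sum>n\<in>UNIV. s0 n + s1 n)) / rVarX q0 q1"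
  unfolding rDplus_def by (simp only: pn_plus)

lemma C_Dminus: "rDminus q0 q1 s0 s1 ylo yhi = ((\<Sum>n\<in>UNIV. max (s0 n + s1 n - yhi * q0 n) (ylo * q1 n)) - (\<Sum>n\<in>UNIV. q1 n) * (\<Sum>n\<in>UNIV. s0 n + s1 n)) / rVarX q0 q1"
proof -
  have "(\<Sum>n\<in>UNIV. max (s0 n + s1 n - yhi * q0 n) (ylo * q1 n)) = (\<Sum>n\<in>UNIV. (s0 n + s1 n) - min (s0 n + s1 n - ylo * q1 n) (yhi * q0 n))"
    by (intro sum.cong) (auto simp: max_def min_def)
  then have e: "(\<Sum>n\<in>UNIV. max (s0 n + s1 n - yhi * q0 n) (ylo * q1 n)) = (\<Sum>n\<in>UNIV. s0 n + s1 n) - (\<Sum>n\<in>UNIV. min (s0 n + s1 n - ylo * q1 n) (yhi * q0 n))"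
    by (simp only: sum_subtractf)
  show ?thesis unfolding rDminus_def pn_minus e by (simp add: algebra_simps)
qed

end
end

end



lemma intg_XN:
  fixes N :: "'a \<Rightarrow> 'n::finite" and g :: "real \<Rightarrow> 'n \<Rightarrow> real"
  assumes b: "basic M X Y N"
  shows "integrable M (\<lambda>\<omega>. g (X \<omega>) (N \<omega>))"
proof -
  have Xm: "X \<in> borel_measurable M" and Nm: "N \<in> measurable M (count_space UNIV)" and P: "prob_space M"
    using b unfolding basic_def by auto
  interpret prob_space M by (rule P)
  have "integrable M (\<lambda>\<omega>. g (X \<omega>) (N \<omega>) * 1)"
  proof -
    have "(\<lambda>\<omega>. g (X \<omega>) (N \<omega>) * 1) \<in> borel_measurable M"
    proof -
      have "(\<lambda>\<omega>. if X \<omega> = 1 then g 1 (N \<omega>) else g 0 (N \<omega>)) \<in> borel_measurable M"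
        using Xm Nm by measurable
      moreover have "\<And>\<omega>. \<omega> \<in> space M \<Longrightarrow> (if X \<omega> = 1 then g 1 (N \<omega>) else g 0 (N \<omega>)) = g (X \<omega>) (N \<omega>) * 1"
        using b unfolding basic_def by force
      ultimately show ?thesis by (rule measurable_cong[THEN iffD1, rotated])
    qed
    moreover have "\<forall>\<omega>\<in>space M. norm (g (X \<omega>) (N \<omega>) * 1) \<le> (\<Sum>x\<in>{0,1::real}. \<Sum>n\<in>UNIV. \<bar>g x n\<bar>)"
    proof
      fix \<omega> assume w: "\<omega> \<in> space M"
      have x: "X \<omega> \<in> {0,1}" using b w unfolding basic_def by auto
      have "\<bar>g (X \<omega>) (N \<omega>)\<bar> \<le> (\<Sum>n\<in>UNIV. \<bar>g (X \<omega>) n\<bar>)"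
        by (rule member_le_sum) auto
      also have "\<dots> \<le> (\<Sum>x\<in>{0,1::real}. \<Sum>n\<in>UNIV. \<bar>g x n\<bar>)"
        using x by (intro member_le_sum[where f="\<lambda>x. \<Sum>n\<in>UNIV. \<bar>g x n\<bar>"]) (auto intro: sum_nonneg)
      finally show "norm (g (X \<omega>) (N \<omega>) * 1) \<le> (\<Sum>x\<in>{0,1::real}. \<Sum>n\<in>UNIV. \<bar>g x n\<bar>)" by simp
    qed
    ultimately show ?thesis
      by (intro integrable_const_bound[where B="\<Sum>x\<in>{0,1::real}. \<Sum>n\<in>UNIV. \<bar>g x n\<bar>"]) auto
  qed
  then show ?thesis by simp
qed

lemma meas_XN:
  fixes N :: "'a \<Rightarrow> 'n::finite" and g :: "real \<Rightarrow> 'n \<Rightarrow> real"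
  assumes b: "basic M X Y N"
  shows "(\<lambda>\<omega>. g (X \<omega>) (N \<omega>)) \<in> borel_measurable M"
  using intg_XN[OF b] by auto

definition Fm :: "('a \<Rightarrow> real) \<Rightarrow> ('a \<Rightarrow> 'n) \<Rightarrow> (real \<Rightarrow> 'n \<Rightarrow> real) \<Rightarrow> 'a \<Rightarrow> real \<times> real \<times> 'n" where
  "Fm X N G \<omega> = (X \<omega>, G (X \<omega>) (N \<omega>), N \<omega>)"

abbreviation MM :: "(real \<times> real \<times> 'n) measure" where
  "MM \<equiv> borel \<Otimes>\<^sub>M (borel \<Otimes>\<^sub>M count_space UNIV)"

definition Xb :: "real \<times> real \<times> 'n \<Rightarrow> real" where "Xb w = (if fst w = 1 then 1 else 0)"
definition Yb :: "real \<times> real \<times> 'n \<Rightarrow> real" where "Yb w = fst (snd w)"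
definition Nb :: "real \<times> real \<times> 'n \<Rightarrow> 'n" where "Nb w = snd (snd w)"

lemma Xb_meas[measurable]: "Xb \<in> borel_measurable MM"
  unfolding Xb_def by measurable
lemma Yb_meas[measurable]: "Yb \<in> borel_measurable MM"
  unfolding Yb_def by measurable
lemma Nb_meas[measurable]: "(Nb :: real \<times> real \<times> 'n \<Rightarrow> 'n) \<in> measurable MM (count_space UNIV)"
  unfolding Nb_def by measurable

lemma build:
  fixes N :: "'a \<Rightarrow> 'n::finite" and G :: "real \<Rightarrow> 'n \<Rightarrow> real"
  assumes b: "basic M X Y N"
  shows "basic (distr M MM (Fm X N G)) Xb Yb Nb"
    and "x \<in> {0,1} \<Longrightarrow> Qc (distr M MM (Fm X N G)) Xb Nb x n = Qc M X N x n"
    and "x \<in> {0,1} \<Longrightarrow> Sc (distr M MM (Fm X N G)) Xb Yb Nb x n = G x n * Qc M X N x n"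
proof -
  have Xm[measurable]: "X \<in> borel_measurable M" and Nm[measurable]: "N \<in> measurable M (count_space UNIV)" and P: "prob_space M"
    using b unfolding basic_def by auto
  have Gm[measurable]: "(\<lambda>\<omega>. G (X \<omega>) (N \<omega>)) \<in> borel_measurable M" by (rule meas_XN[OF b])
  have Fmm[measurable]: "Fm X N G \<in> measurable M MM"
    unfolding Fm_def by measurable
  let ?M' = "distr M MM (Fm X N G)"
  have Yi: "integrable ?M' Yb"
    using intg_XN[OF b, of G] by (subst integrable_distr_eq) (auto simp: Yb_def Fm_def)
  show "basic ?M' Xb Yb Nb"
    unfolding basic_def using Yi prob_space.prob_space_distr[OF P Fmm]
    by (auto simp: Xb_def)
  have pre: "Fm X N G -` ev2 ?M' Xb Nb x n \<inter> space M = ev2 M X N x n" if x: "x \<in> {0,1}" for x n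
  proof -
    have "Xb (Fm X N G \<omega>) = X \<omega>" if "\<omega> \<in> space M" for \<omega>
      using b that unfolding basic_def by (force simp: Xb_def Fm_def)
    then show ?thesis by (auto simp: ev2_def Nb_def Fm_def space_pair_measure)
  qed
  have sets': "ev2 ?M' Xb Nb x n \<in> sets MM" for x n
    unfolding ev2_def by simp measurable
  show "Qc ?M' Xb Nb x n = Qc M X N x n" if x: "x \<in> {0,1}"
    unfolding Qc_def by (subst measure_distr[OF Fmm sets']) (simp add: pre[OF x])
  show "Sc ?M' Xb Yb Nb x n = G x n * Qc M X N x n" if x: "x \<in> {0,1}"
  proof -
    have "Sc ?M' Xb Yb Nb x n = (\<integral>\<omega>. indicator (ev2 ?M' Xb Nb x n) (Fm X N G \<omega>) * Yb (Fm X N G \<omega>) \<partial>M)"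
      unfolding Sc_def by (rule integral_distr[OF Fmm]) (use sets' in measurable)
    also have "\<dots> = (\<integral>\<omega>. G x n * indicator (ev2 M X N x n) \<omega> \<partial>M)"
    proof (rule Bochner_Integration.integral_cong)
      fix \<omega> assume w: "\<omega> \<in> space M"
      have "Fm X N G \<omega> \<in> ev2 ?M' Xb Nb x n \<longleftrightarrow> \<omega> \<in> ev2 M X N x n"
        using pre[OF x, of n] w by blast
      then show "indicator (ev2 ?M' Xb Nb x n) (Fm X N G \<omega>) * Yb (Fm X N G \<omega>) = G x n * indicator (ev2 M X N x n) \<omega>"
        by (auto simp: indicator_def Yb_def Fm_def ev2_def)
    qed simp
    also have "\<dots> = G x n * Qc M X N x n"
      by (simp add: Qc_def ev2_def ind_coll)
    finally show ?thesis .
  qed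
qed




lemma cellb:
  fixes q s :: real
  assumes "q \<ge> 0" "q > 0 \<longrightarrow> s / q \<in> {ylo..yhi}" "q = 0 \<longrightarrow> s = 0"
  shows "ylo * q \<le> s \<and> s \<le> yhi * q"
proof (cases "q = 0")
  case True then show ?thesis using assms by simp
next
  case False then have "q > 0" using assms by simp
  then show ?thesis using assms by (auto simp: field_simps)
qed

context
  fixes M :: "'a measure" and X Y :: "'a \<Rightarrow> real" and N :: "'a \<Rightarrow> 'n::finite"
    and ylo yhi :: real
  assumes std: "standing M X Y N ylo yhi"
begin

lemma sb: "basic M X Y N" using std unfolding standing_def basic_def by auto

abbreviation "u0 \<equiv> Qc M X N 0"
abbreviation "u1 \<equiv> Qc M X N 1"
abbreviation "v0 \<equiv> Sc M X Y N 0"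
abbreviation "v1 \<equiv> Sc M X Y N 1"

lemma nn0: "\<And>n. u0 n \<ge> 0" and nn1: "\<And>n. u1 n \<ge> 0" by (simp_all add: Q_nonneg[OF sb])
lemma z0: "\<And>n. u0 n = 0 \<Longrightarrow> v0 n = 0" and z1: "\<And>n. u1 n = 0 \<Longrightarrow> v1 n = 0"
  by (simp_all add: S_zero[OF sb])
lemma sum1: "(\<Sum>n\<in>UNIV. u0 n + u1 n) = 1" by (rule Q_sum[OF sb])

lemma bnd: "ylo * Qc M X N x n \<le> Sc M X Y N x n \<and> Sc M X Y N x n \<le> yhi * Qc M X N x n" if x: "x \<in> {0,1}"
proof (rule cellb)
  show "Qc M X N x n \<ge> 0" by (simp add: Q_nonneg[OF sb])
  show "Qc M X N x n = 0 \<longrightarrow> Sc M X Y N x n = 0" by (simp add: S_zero[OF sb])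
  show "Qc M X N x n > 0 \<longrightarrow> Sc M X Y N x n / Qc M X N x n \<in> {ylo..yhi}"
    using std x unfolding standing_def by (auto simp: Qc_def Sc_def condE_def)
qed

lemma P1P0: "(\<Sum>n\<in>UNIV. u1 n) > 0 \<and> (\<Sum>n\<in>UNIV. u0 n) > 0"
proof -
  obtain n where n: "pN M N n > 0" "0 < cN M X N n" "cN M X N n < 1"
    using std unfolding standing_def by auto
  have p: "u0 n + u1 n > 0" using n(1) R_pN[OF sb] by simp
  have a: "0 < u1 n / (u0 n + u1 n)" "u1 n / (u0 n + u1 n) < 1" using n(2,3) R_cNX[OF sb] by simp_all
  have "u1 n > 0" using a(1) p by (simp add: zero_less_divide_iff)
  moreover have "u0 n > 0" using a(2) p by (simp add: divide_less_eq)
  moreover have "u1 n \<le> (\<Sum>n\<in>UNIV. u1 n)" by (rule member_le_sum) (auto simp: nn1)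
  moreover have "u0 n \<le> (\<Sum>n\<in>UNIV. u0 n)" by (rule member_le_sum) (auto simp: nn0)
  ultimately show ?thesis by linarith
qed

lemmas P1 = P1P0[THEN conjunct1] and P0 = P1P0[THEN conjunct2]


lemma V_pos': "rVarX u0 u1 > 0" by (rule V_pos[OF nn0 nn1 z0 z1 sum1 P1 P0])

lemma e_Dpar: "Dpar M X Y = ((\<Sum>n\<in>UNIV. v1 n) - (\<Sum>n\<in>UNIV. u1 n) * (\<Sum>n\<in>UNIV. v0 n + v1 n)) / rVarX u0 u1"
  unfolding R_Dpar[OF sb] by (rule C_Dpar[OF nn0 nn1 z0 z1 sum1 P1 P0])

lemma e_Dplus: "D_MOB_plus M X Y N ylo yhi = ((\<Sum>n\<in>UNIV. min (v0 n + v1 n - ylo * u0 n) (yhi * u1 n)) - (\<Sum>n\<in>UNIV. u1 n) * (\<Sum>n\<in>UNIV. v0 n + v1 n)) / rVarX u0 u1"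
  unfolding R_Dplus[OF sb] by (rule C_Dplus[OF nn0 nn1 z0 z1 sum1 P1 P0])

lemma e_Dminus: "D_MOB_minus M X Y N ylo yhi = ((\<Sum>n\<in>UNIV. max (v0 n + v1 n - yhi * u0 n) (ylo * u1 n)) - (\<Sum>n\<in>UNIV. u1 n) * (\<Sum>n\<in>UNIV. v0 n + v1 n)) / rVarX u0 u1"
  unfolding R_Dminus[OF sb] by (rule C_Dminus[OF nn0 nn1 z0 z1 sum1 P1 P0])

lemma e_delta: "deltaW M X Y N = rCov u0 u1 v0 v1 - Dpar M X Y * rVarXN u0 u1"
  unfolding R_deltaW[OF sb] R_Dpar[OF sb] by (rule C1[OF nn0 nn1 z0 z1 sum1 P1 P0])

lemma e_DER: "D_ER M X Y N = rCov u0 u1 v0 v1 / rVarXN u0 u1"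
  by (rule R_DER[OF sb])

lemma e_var: "var M (rvN M X N) = rVarXN u0 u1"
  by (rule R_varXN[OF sb])

lemma LsU: "max (v0 n + v1 n - yhi * u0 n) (ylo * u1 n) \<le> v1 n \<and> v1 n \<le> min (v0 n + v1 n - ylo * u0 n) (yhi * u1 n)"
  using bnd[of 0 n] bnd[of 1 n] by auto

lemma ineq_minus: "D_MOB_minus M X Y N ylo yhi \<le> Dpar M X Y"
proof -
  have "(\<Sum>n\<in>UNIV. max (v0 n + v1 n - yhi * u0 n) (ylo * u1 n)) \<le> (\<Sum>n\<in>UNIV. v1 n)"
    by (rule sum_mono) (use LsU in blast)
  then show ?thesis unfolding e_Dminus e_Dpar using V_pos' by (intro divide_right_mono) auto
qed

lemma ineq_plus: "Dpar M X Y \<le> D_MOB_plus M X Y N ylo yhi"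
proof -
  have "(\<Sum>n\<in>UNIV. v1 n) \<le> (\<Sum>n\<in>UNIV. min (v0 n + v1 n - ylo * u0 n) (yhi * u1 n))"
    by (rule sum_mono) (use LsU in blast)
  then show ?thesis unfolding e_Dplus e_Dpar using V_pos' by (intro divide_right_mono) auto
qed

lemma ineq_ER:
  assumes W: "var M (rvN M X N) > 0"
  shows "deltaW M X Y N \<ge> 0 \<longleftrightarrow> Dpar M X Y \<le> D_ER M X Y N"
  using W unfolding e_delta e_DER e_var by (simp add: le_divide_eq algebra_simps)


lemma sharp:
  assumes d1: "D_MOB_minus M X Y N ylo yhi \<le> d" and d2: "d \<le> D_MOB_plus M X Y N ylo yhi"
  shows "\<exists>(M' :: (real \<times> real \<times> 'n) measure) X' Y' N'. standing M' X' Y' N' ylo yhi \<and>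
     same_obs M X Y N M' X' Y' N' \<and> deltaW M' X' Y' N' = rCov u0 u1 v0 v1 - d * rVarXN u0 u1 \<and> Dpar M' X' Y' = d"
proof -
  define Lf where "Lf n = max (v0 n + v1 n - yhi * u0 n) (ylo * u1 n)" for n
  define Uf where "Uf n = min (v0 n + v1 n - ylo * u0 n) (yhi * u1 n)" for n
  define P where "P = (\<Sum>n\<in>UNIV. u1 n)"
  define EY where "EY = (\<Sum>n\<in>UNIV. v0 n + v1 n)"
  define V where "V = rVarX u0 u1"
  define T where "T = d * V + P * EY"
  have V: "V > 0" using V_pos' V_def by simp
  have T1: "(\<Sum>n\<in>UNIV. Lf n) \<le> T"
    using d1 V unfolding e_Dminus Lf_def[symmetric] P_def[symmetric] EY_def[symmetric] V_def[symmetric] T_def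
    by (simp add: divide_le_eq algebra_simps)
  have T2: "T \<le> (\<Sum>n\<in>UNIV. Uf n)"
    using d2 V unfolding e_Dplus Uf_def[symmetric] P_def[symmetric] EY_def[symmetric] V_def[symmetric] T_def
    by (simp add: le_divide_eq algebra_simps)
  have LU: "Lf n \<le> v1 n \<and> v1 n \<le> Uf n" for n using LsU unfolding Lf_def Uf_def by blast
  define t where "t = (if (\<Sum>n\<in>UNIV. Uf n) - (\<Sum>n\<in>UNIV. Lf n) > 0 then (T - (\<Sum>n\<in>UNIV. Lf n)) / ((\<Sum>n\<in>UNIV. Uf n) - (\<Sum>n\<in>UNIV. Lf n)) else 0)"
  have t: "0 \<le> t" "t \<le> 1" using T1 T2 unfolding t_def by (auto simp: divide_le_eq)
  define w1 where "w1 n = Lf n + t * (Uf n - Lf n)" for n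
  define w0 where "w0 n = v0 n + v1 n - w1 n" for n
  have w1b: "Lf n \<le> w1 n \<and> w1 n \<le> Uf n" for n
  proof -
    have a: "Uf n - Lf n \<ge> 0" using LU[of n] by linarith
    have "0 \<le> t * (Uf n - Lf n)" using a t by simp
    moreover have "t * (Uf n - Lf n) \<le> 1 * (Uf n - Lf n)" using a t by (intro mult_right_mono) auto
    ultimately show ?thesis unfolding w1_def by simp
  qed
  have sw1: "(\<Sum>n\<in>UNIV. w1 n) = T"
  proof -
    have e: "(\<Sum>n\<in>UNIV. w1 n) = (\<Sum>n\<in>UNIV. Lf n) + t * ((\<Sum>n\<in>UNIV. Uf n) - (\<Sum>n\<in>UNIV. Lf n))"
      unfolding w1_def by (simp add: sum.distrib sum_distrib_left[symmetric] sum_subtractf)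
    have m: "(\<Sum>n\<in>UNIV. Lf n) \<le> (\<Sum>n\<in>UNIV. Uf n)" by (rule sum_mono) (meson LU order_trans)
    show ?thesis
    proof (cases "(\<Sum>n\<in>UNIV. Uf n) - (\<Sum>n\<in>UNIV. Lf n) > 0")
      case True then show ?thesis unfolding e t_def by simp
    next
      case False then show ?thesis unfolding e t_def using m T1 T2 by simp
    qed
  qed
  have w1c: "ylo * u1 n \<le> w1 n \<and> w1 n \<le> yhi * u1 n" for n
    using w1b[of n] unfolding Lf_def Uf_def by auto
  have w0c: "ylo * u0 n \<le> w0 n \<and> w0 n \<le> yhi * u0 n" for n
    using w1b[of n] unfolding Lf_def Uf_def w0_def by auto
  have wz1: "u1 n = 0 \<Longrightarrow> w1 n = 0" for n using w1c[of n] by simp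
  have wz0: "u0 n = 0 \<Longrightarrow> w0 n = 0" for n using w0c[of n] by simp
  have wsum: "w0 n + w1 n = v0 n + v1 n" for n unfolding w0_def by simp
  define G :: "real \<Rightarrow> 'n \<Rightarrow> real" where "G x n = (if x = 1 then w1 n / u1 n else w0 n / u0 n)" for x n
  have G1: "G 1 n * u1 n = w1 n" for n
    using wz1[of n] by (cases "u1 n = 0") (auto simp: G_def)
  have G0: "G 0 n * u0 n = w0 n" for n
    using wz0[of n] by (cases "u0 n = 0") (auto simp: G_def)
  define M' where "M' = distr M MM (Fm X N G)"
  have b': "basic M' Xb Yb Nb" unfolding M'_def by (rule build(1)[OF sb])
  have Q'0: "Qc M' Xb Nb 0 = u0" unfolding M'_def by (rule ext) (rule build(2)[OF sb], simp)
  have Q'1: "Qc M' Xb Nb 1 = u1" unfolding M'_def by (rule ext) (rule build(2)[OF sb], simp)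
  have S'0: "Sc M' Xb Yb Nb 0 = w0" unfolding M'_def
    by (rule ext) (subst build(3)[OF sb], simp, rule G0)
  have S'1: "Sc M' Xb Yb Nb 1 = w1" unfolding M'_def
    by (rule ext) (subst build(3)[OF sb], simp, rule G1)
  have so: "same_obs M X Y N M' Xb Yb Nb"
    unfolding same_obs_def R_pN[OF sb] R_pN[OF b'] R_cNX[OF sb] R_cNX[OF b'] R_cNY[OF sb] R_cNY[OF b'] Q'0 Q'1 S'0 S'1
    by (simp add: wsum)
  have stdM': "standing M' Xb Yb Nb ylo yhi"
  proof -
    have bb: "prob_space M' \<and> Xb \<in> borel_measurable M' \<and> (\<forall>\<omega>\<in>space M'. Xb \<omega> \<in> {0, 1}) \<and>
      integrable M' Yb \<and> Nb \<in> measurable M' (count_space UNIV)" using b' unfolding basic_def by auto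
    have ex: "\<exists>n. pN M' Nb n > 0 \<and> 0 < cN M' Xb Nb n \<and> cN M' Xb Nb n < 1"
      using std so unfolding standing_def same_obs_def by auto
    have cells: "\<forall>x\<in>{0, 1}. \<forall>n. measure M' (ev2 M' Xb Nb x n) > 0 \<longrightarrow>
         condE M' Yb (ev2 M' Xb Nb x n) \<in> {ylo..yhi}"
    proof (intro ballI allI impI)
      fix x :: real and n assume x: "x \<in> {0,1}" and pos: "measure M' (ev2 M' Xb Nb x n) > 0"
      have c: "condE M' Yb (ev2 M' Xb Nb x n) = Sc M' Xb Yb Nb x n / Qc M' Xb Nb x n"
        by (simp add: condE_def Sc_def Qc_def)
      show "condE M' Yb (ev2 M' Xb Nb x n) \<in> {ylo..yhi}"
      proof (cases "x = 0")
        case True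
        then have "u0 n > 0" using pos Q'0 by (simp add: Qc_def[symmetric])
        then show ?thesis using True c Q'0 S'0 w0c[of n] by (simp add: le_divide_eq divide_le_eq)
      next
        case False then have x1: "x = 1" using x by simp
        then have "u1 n > 0" using pos Q'1 by (simp add: Qc_def[symmetric])
        then show ?thesis using x1 c Q'1 S'1 w1c[of n] by (simp add: le_divide_eq divide_le_eq)
      qed
    qed
    have "ylo \<le> yhi" using std unfolding standing_def by auto
    then show ?thesis unfolding standing_def using bb ex cells by (auto simp: borel_measurable_integrable)
  qed
  have dp: "Dpar M' Xb Yb = d"
  proof -
    have "Dpar M' Xb Yb = ((\<Sum>n\<in>UNIV. w1 n) - P * (\<Sum>n\<in>UNIV. w0 n + w1 n)) / V"
      unfolding R_Dpar[OF b'] Q'0 Q'1 S'0 S'1 P_def V_def by (rule C_Dpar[OF nn0 nn1 wz0 wz1 sum1 P1 P0])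
    also have "\<dots> = d" unfolding sw1 wsum EY_def[symmetric] T_def using V by simp
    finally show ?thesis .
  qed
  have dw: "deltaW M' Xb Yb Nb = rCov u0 u1 v0 v1 - d * rVarXN u0 u1"
  proof -
    have "deltaW M' Xb Yb Nb = rCov u0 u1 w0 w1 - rDpar u0 u1 w0 w1 * rVarXN u0 u1"
      unfolding R_deltaW[OF b'] Q'0 Q'1 S'0 S'1 by (rule C1[OF nn0 nn1 wz0 wz1 sum1 P1 P0])
    moreover have "rCov u0 u1 w0 w1 = rCov u0 u1 v0 v1"
      by (simp add: L_Cov[OF nn0 nn1 wz0 wz1 sum1] L_Cov[OF nn0 nn1 z0 z1 sum1] wsum)
    moreover have "rDpar u0 u1 w0 w1 = d" using dp unfolding R_Dpar[OF b'] Q'0 Q'1 S'0 S'1 .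
    ultimately show ?thesis by simp
  qed
  show ?thesis using stdM' so dw dp by blast
qed


lemma ineq_ER2:
  assumes W: "var M (rvN M X N) > 0"
  shows "deltaW M X Y N \<le> 0 \<longleftrightarrow> D_ER M X Y N \<le> Dpar M X Y"
  using W unfolding e_delta e_DER e_var by (simp add: divide_le_eq algebra_simps)

lemma sharp_sign:
  assumes W: "var M (rvN M X N) > 0"
    and d1: "D_MOB_minus M X Y N ylo yhi \<le> d" and d2: "d \<le> D_MOB_plus M X Y N ylo yhi"
  shows "\<exists>(M' :: (real \<times> real \<times> 'n) measure) X' Y' N'. standing M' X' Y' N' ylo yhi \<and>
     same_obs M X Y N M' X' Y' N' \<and> (deltaW M' X' Y' N' \<ge> 0 \<longleftrightarrow> d \<le> D_ER M X Y N)
     \<and> (deltaW M' X' Y' N' \<le> 0 \<longleftrightarrow> D_ER M X Y N \<le> d) \<and> Dpar M' X' Y' = d"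
proof -
  obtain M' X' Y' N' where h: "standing M' X' Y' N' ylo yhi" "same_obs M X Y N M' X' Y' N'"
    "deltaW M' X' Y' N' = rCov u0 u1 v0 v1 - d * rVarXN u0 u1" "Dpar M' X' Y' = (d::real)"
    and ty: "(M' :: (real \<times> real \<times> 'n) measure) = M'"
    using sharp[OF d1 d2] by blast
  have W': "rVarXN u0 u1 > 0" using W e_var by simp
  have "deltaW M' X' Y' N' \<ge> 0 \<longleftrightarrow> d \<le> D_ER M X Y N"
    unfolding h(3) e_DER using W' by (simp add: le_divide_eq algebra_simps)
  moreover have "deltaW M' X' Y' N' \<le> 0 \<longleftrightarrow> D_ER M X Y N \<le> d"
    unfolding h(3) e_DER using W' by (simp add: divide_le_eq algebra_simps)
  ultimately show ?thesis using h by blast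
qed

end

theorem proposition5:
  fixes M :: "'a measure" and X Y :: "'a \<Rightarrow> real" and N :: "'a \<Rightarrow> 'n::finite"
    and ylo yhi :: real
  assumes std: "standing M X Y N ylo yhi"
    and varpos: "var M (rvN M X N) > 0"
  shows
    "(deltaW M X Y N \<ge> 0 \<longrightarrow>
        Dpar M X Y \<in> {D_MOB_minus M X Y N ylo yhi ..
                        min (D_MOB_plus M X Y N ylo yhi) (D_ER M X Y N)}
      \<and> (\<forall>d \<in> {D_MOB_minus M X Y N ylo yhi ..
                 min (D_MOB_plus M X Y N ylo yhi) (D_ER M X Y N)}.
           \<exists>(M' :: (real \<times> real \<times> 'n) measure) X' Y' N'.
              standing M' X' Y' N' ylo yhi \<and> same_obs M X Y N M' X' Y' N' \<and>
              deltaW M' X' Y' N' \<ge> 0 \<and> Dpar M' X' Y' = d))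
   \<and> (deltaW M X Y N \<le> 0 \<longrightarrow>
        Dpar M X Y \<in> {max (D_MOB_minus M X Y N ylo yhi) (D_ER M X Y N) ..
                        D_MOB_plus M X Y N ylo yhi}
      \<and> (\<forall>d \<in> {max (D_MOB_minus M X Y N ylo yhi) (D_ER M X Y N) ..
                 D_MOB_plus M X Y N ylo yhi}.
           \<exists>(M' :: (real \<times> real \<times> 'n) measure) X' Y' N'.
              standing M' X' Y' N' ylo yhi \<and> same_obs M X Y N M' X' Y' N' \<and>
              deltaW M' X' Y' N' \<le> 0 \<and> Dpar M' X' Y' = d))"
proof -
  note i1 = ineq_minus[OF std] and i2 = ineq_plus[OF std]
    and i3 = ineq_ER[OF std varpos] and i4 = ineq_ER2[OF std varpos]
  have A: "\<exists>(M' :: (real \<times> real \<times> 'n) measure) X' Y' N'.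
              standing M' X' Y' N' ylo yhi \<and> same_obs M X Y N M' X' Y' N' \<and>
              deltaW M' X' Y' N' \<ge> 0 \<and> Dpar M' X' Y' = d"
    if d: "d \<in> {D_MOB_minus M X Y N ylo yhi .. min (D_MOB_plus M X Y N ylo yhi) (D_ER M X Y N)}" for d
  proof -
    have "D_MOB_minus M X Y N ylo yhi \<le> d" "d \<le> D_MOB_plus M X Y N ylo yhi" "d \<le> D_ER M X Y N"
      using d by auto
    then show ?thesis using sharp_sign[OF std varpos, of d] by blast
  qed
  have B: "\<exists>(M' :: (real \<times> real \<times> 'n) measure) X' Y' N'.
              standing M' X' Y' N' ylo yhi \<and> same_obs M X Y N M' X' Y' N' \<and>
              deltaW M' X' Y' N' \<le> 0 \<and> Dpar M' X' Y' = d"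
    if d: "d \<in> {max (D_MOB_minus M X Y N ylo yhi) (D_ER M X Y N) .. D_MOB_plus M X Y N ylo yhi}" for d
  proof -
    have "D_MOB_minus M X Y N ylo yhi \<le> d" "d \<le> D_MOB_plus M X Y N ylo yhi" "D_ER M X Y N \<le> d"
      using d by auto
    then show ?thesis using sharp_sign[OF std varpos, of d] by blast
  qed
  show ?thesis using i1 i2 i3 i4 A B by auto
qed



end
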